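(* Let $\mathcal{X}_1,\mathcal{X}_2$ be non-empty sets, $\mathcal{B}_1\subseteq\mathcal{P}(\mathcal{X}_1)\setminus\{\emptyset\}$, $\mathcal{B}_2\subseteq\mathcal{P}(\mathcal{X}_2)\setminus\{\emptyset\}$, and for $i\in\{1,2\}$ let $\underline{P}_i$ be a coherent conditional lower prevision on $\mathcal{C}_i\subseteq\mathcal{C}(\mathcal{X}_i)$ with natural extension $\underline{E}_i$ to $\mathcal{C}(\mathcal{X}_i)$, and let $\overline{E}_i(g):=-\underline{E}_i(-g)$. Let $\{i,j\}=\{1,2\}$. Then for any $h\in\mathcal{G}(\mathcal{X}_j)$ and any $\mathcal{B}_i$-measurable $g\in\mathcal{G}_{\geq0}(\mathcal{X}_i)$, $$(\underline{P}_1\otimes\underline{P}_2)(gh)=\underline{E}_i\big(g\,\underline{E}_j(h)\big)=\begin{cases}\underline{E}_i(g)\underline{E}_j(h)&\text{if }\underline{E}_j(h)\geq0,\\ \overline{E}_i(g)\underline{E}_j(h)&\text{if }\underline{E}_j(h)\leq0.\end{cases}$$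
   Context: Gambles on a non-empty set $\mathcal{X}$ are bounded real functions; $\mathcal{G}(\mathcal{X})$, $\mathcal{G}_{\geq0}(\mathcal{X})$, $\mathcal{G}_{>0}(\mathcal{X})$ denote all gambles, non-negative gambles, non-negative non-zero gambles. For $\mathcal{A}\subseteq\mathcal{G}(\mathcal{X})$: $\mathrm{posi}(\mathcal{A}):=\{\sum_{i=1}^n\lambda_if_i\colon n\in\mathbb{N},\lambda_i>0,f_i\in\mathcal{A}\}$, $\mathcal{E}(\mathcal{A}):=\mathrm{posi}(\mathcal{A}\cup\mathcal{G}_{>0}(\mathcal{X}))$. A coherent set of desirable gambles $\mathcal{D}\subseteq\mathcal{G}(\mathcal{X})$ satisfies: (D1) $f\geq0,f\neq0\Rightarrow f\in\mathcal{D}$; (D2) $f\in\mathcal{D},\lambda>0\Rightarrow\lambda f\in\mathcal{D}$; (D3) $f,g\in\mathcal{D}\Rightarrow f+g\in\mathcal{D}$; (D4) $f\leq0\Rightarrow f\notin\mathcal{D}$. $\mathcal{C}(\mathcal{X}):=\mathcal{G}(\mathcal{X})\times(\mathcal{P}(\mathcal{X})\setminus\{\emptyset\})$; a conditional lower prevision on $\mathcal{C}\subseteq\mathcal{C}(\mathcal{X})$ is a map $(f,B)\mapsto\underline{P}(f\vert B)\in\mathbb{R}\cup\{\pm\infty\}$. For $\mathcal{D}\subseteq\mathcal{G}(\mathcal{X})$, $\underline{P}_{\mathcal{D}}(f\vert B):=\sup\{\mu\in\mathbb{R}\colon[f-\mu]\mathbb{I}_B\in\mathcal{D}\}$. $\underline{P}$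 is coherent if $\underline{P}=\underline{P}_{\mathcal{D}}$ on its domain for some coherent set of desirable gambles $\mathcal{D}$. For coherent $\underline{P}$ on $\mathcal{C}$, $\mathcal{E}(\underline{P}):=\mathcal{E}(\{[f-\mu]\mathbb{I}_B\colon(f,B)\in\mathcal{C},\mu<\underline{P}(f\vert B)\})$ and its natural extension is $\underline{E}(f\vert B):=\underline{P}_{\mathcal{E}(\underline{P})}(f\vert B)$ for all $(f,B)\in\mathcal{C}(\mathcal{X})$. Unconditional notation: $\underline{P}(f):=\underline{P}(f\vert\mathcal{X})$. Gambles on $\mathcal{X}_i$ are identified with their cylindrical extensions to $\mathcal{X}_1\times\mathcal{X}_2$, events $B\subseteq\mathcal{X}_1$ with $B\times\mathcal{X}_2$ (similarly for $\mathcal{X}_2$). For coherent sets of desirable gambles $\mathcal{D}_1,\mathcal{D}_2$: $\mathcal{D}_1\otimes\mathcal{D}_2:=\mathcal{E}(\mathcal{A}_{1\to2}\cup\mathcal{A}_{2\to1})$, $\mathcal{A}_{1\to2}:=\{f_2(X_2)\mathbb{I}_{B_1}(X_1)\colon f_2\in\mathcal{D}_2,B_1\in\mathcal{B}_1\cup\{\mathcal{X}_1\}\}$, $\mathcal{A}_{2\to1}:=\{f_1(X_1)\mathbb{I}_{B_2}(X_2)\colon f_1\in\mathcal{D}_1,B_2\in\mathcal{B}_2\cup\{\mathcal{X}_2\}\}$. Then $(\underline{P}_1\otimes\underline{P}_2)(f\vert B):=\underline{P}_{\mathcal{D}}(f\vert B)$ for $(f,B)\in\mathcal{C}(\mathcal{X}_1\times\mathcal{X}_2)$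 with $\mathcal{D}=\mathcal{E}(\underline{P}_1)\otimes\mathcal{E}(\underline{P}_2)$. Measurability: for $\mathcal{B}\subseteq\mathcal{P}(\mathcal{X})\setminus\{\emptyset\}$, $g\in\mathcal{G}_{\geq0}(\mathcal{X})$ is simple $\mathcal{B}$-measurable if $g=c_0+\sum_{k=1}^nc_k\mathbb{I}_{B_k}$ for some $n\in\mathbb{N}\cup\{0\}$, $c_0,\dots,c_n\geq0$, $B_k\in\mathcal{B}$; $g\in\mathcal{G}_{\geq0}(\mathcal{X})$ is $\mathcal{B}$-measurable if there is a sequence of simple $\mathcal{B}$-measurable $g_n\in\mathcal{G}_{\geq0}(\mathcal{X})$ with $\sup|g-g_n|\to0$. *)

theory Defs
  imports Complex_Main "HOL-Library.Extended_Real" "HOL-Library.Indicator_Function"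
begin

text \<open>Gambles on a type (the possibility space is the whole type, which is non-empty).\<close>
definition gambles :: "('a \<Rightarrow> real) set" where
  "gambles = {f. \<exists>M. \<forall>x. \<bar>f x\<bar> \<le> M}"

definition nonneg_gambles :: "('a \<Rightarrow> real) set" where
  "nonneg_gambles = {f \<in> gambles. \<forall>x. f x \<ge> 0}"

definition pos_gambles :: "('a \<Rightarrow> real) set" where
  "pos_gambles = {f \<in> gambles. (\<forall>x. f x \<ge> 0) \<and> f \<noteq> (\<lambda>x. 0)}"

definition posi :: "('a \<Rightarrow> real) set \<Rightarrow> ('a \<Rightarrow> real) set" where
  "posi A = {f. \<exists>n::nat. n \<ge> 1 \<and> (\<exists>lam fs. (\<forall>i<n. lam i > (0::real) \<and> fs i \<in> A)
              \<and> f = (\<lambda>x. \<Sum>i<n. lam i * fs i x))}"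

definition natext_set :: "('a \<Rightarrow> real) set \<Rightarrow> ('a \<Rightarrow> real) set" where
  "natext_set A = posi (A \<union> pos_gambles)"

definition coherent_dgs :: "('a \<Rightarrow> real) set \<Rightarrow> bool" where
  "coherent_dgs D \<longleftrightarrow> D \<subseteq> gambles
     \<and> (\<forall>f \<in> gambles. (\<forall>x. f x \<ge> 0) \<and> f \<noteq> (\<lambda>x. 0) \<longrightarrow> f \<in> D)
     \<and> (\<forall>f \<in> D. \<forall>lam::real. lam > 0 \<longrightarrow> (\<lambda>x. lam * f x) \<in> D)
     \<and> (\<forall>f \<in> D. \<forall>g \<in> D. (\<lambda>x. f x + g x) \<in> D)
     \<and> (\<forall>f \<in> gambles. (\<forall>x. f x \<le> 0) \<longrightarrow> f \<notin> D)"

definition Cdom :: "(('a \<Rightarrow> real) \<times> 'a set) set" where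
  "Cdom = gambles \<times> {B. B \<noteq> {}}"

text \<open>Lower prevision induced by a set of desirable gambles (Sup of empty set is -\<infinity>).\<close>
definition lpr :: "('a \<Rightarrow> real) set \<Rightarrow> ('a \<Rightarrow> real) \<Rightarrow> 'a set \<Rightarrow> ereal" where
  "lpr D f B = Sup (ereal ` {mu. (\<lambda>x. (f x - mu) * indicator B x) \<in> D})"

definition coherent_clp ::
  "(('a \<Rightarrow> real) \<times> 'a set) set \<Rightarrow> (('a \<Rightarrow> real) \<Rightarrow> 'a set \<Rightarrow> ereal) \<Rightarrow> bool" where
  "coherent_clp C P \<longleftrightarrow> (\<exists>D. coherent_dgs D \<and> (\<forall>(f, B) \<in> C. P f B = lpr D f B))"

definition natext_clp_set ::
  "(('a \<Rightarrow> real) \<times> 'a set) set \<Rightarrow> (('a \<Rightarrow> real) \<Rightarrow> 'a set \<Rightarrow> ereal) \<Rightarrow> ('a \<Rightarrow> real) set" where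
  "natext_clp_set C P = natext_set
     {h. \<exists>f B mu. (f, B) \<in> C \<and> ereal mu < P f B \<and> h = (\<lambda>x. (f x - mu) * indicator B x)}"

definition natext ::
  "(('a \<Rightarrow> real) \<times> 'a set) set \<Rightarrow> (('a \<Rightarrow> real) \<Rightarrow> 'a set \<Rightarrow> ereal) \<Rightarrow> ('a \<Rightarrow> real) \<Rightarrow> 'a set \<Rightarrow> ereal" where
  "natext C P f B = lpr (natext_clp_set C P) f B"

definition prod_dgs ::
  "'a set set \<Rightarrow> 'b set set \<Rightarrow> ('a \<Rightarrow> real) set \<Rightarrow> ('b \<Rightarrow> real) set \<Rightarrow> ('a \<times> 'b \<Rightarrow> real) set" where
  "prod_dgs B1 B2 D1 D2 = natext_set
     ({h. \<exists>f2 E1. f2 \<in> D2 \<and> E1 \<in> B1 \<union> {UNIV} \<and> h = (\<lambda>(x, y). f2 y * indicator E1 x)} \<union>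
      {h. \<exists>f1 E2. f1 \<in> D1 \<and> E2 \<in> B2 \<union> {UNIV} \<and> h = (\<lambda>(x, y). f1 x * indicator E2 y)})"

definition prod_clp ::
  "'a set set \<Rightarrow> 'b set set \<Rightarrow>
   (('a \<Rightarrow> real) \<times> 'a set) set \<Rightarrow> (('a \<Rightarrow> real) \<Rightarrow> 'a set \<Rightarrow> ereal) \<Rightarrow>
   (('b \<Rightarrow> real) \<times> 'b set) set \<Rightarrow> (('b \<Rightarrow> real) \<Rightarrow> 'b set \<Rightarrow> ereal) \<Rightarrow>
   ('a \<times> 'b \<Rightarrow> real) \<Rightarrow> ('a \<times> 'b) set \<Rightarrow> ereal" where
  "prod_clp B1 B2 C1 P1 C2 P2 f B =
     lpr (prod_dgs B1 B2 (natext_clp_set C1 P1) (natext_clp_set C2 P2)) f B"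

definition simple_meas :: "'a set set \<Rightarrow> ('a \<Rightarrow> real) \<Rightarrow> bool" where
  "simple_meas \<B> g \<longleftrightarrow> g \<in> nonneg_gambles \<and>
     (\<exists>(n::nat) (c::nat \<Rightarrow> real) (Bs::nat \<Rightarrow> 'a set).
        (\<forall>k\<le>n. c k \<ge> 0) \<and> (\<forall>k\<in>{1..n}. Bs k \<in> \<B>) \<and>
        g = (\<lambda>x. c 0 + (\<Sum>k=1..n. c k * indicator (Bs k) x)))"

definition meas :: "'a set set \<Rightarrow> ('a \<Rightarrow> real) \<Rightarrow> bool" where
  "meas \<B> g \<longleftrightarrow> g \<in> nonneg_gambles \<and>
     (\<exists>gs::nat \<Rightarrow> 'a \<Rightarrow> real. (\<forall>n. simple_meas \<B> (gs n)) \<and>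
        (\<forall>e>0. \<exists>N. \<forall>n\<ge>N. \<forall>x. \<bar>g x - gs n x\<bar> \<le> e))"

end

theory Submission
  imports Defs
begin


lemma gambles_iff: "f \<in> gambles \<longleftrightarrow> (\<exists>M. \<forall>x. \<bar>f x\<bar> \<le> M)"
  by (simp add: gambles_def)

lemma gamblesI: "(\<And>x. \<bar>f x\<bar> \<le> M) \<Longrightarrow> f \<in> gambles"
  unfolding gambles_def by blast

lemma gamblesE: assumes "f \<in> gambles" obtains M where "M \<ge> 0" "\<And>x. \<bar>f x\<bar> \<le> M"
proof -
  obtain M where M: "\<forall>x. \<bar>f x\<bar> \<le> M" using assms unfolding gambles_def by blast
  hence "\<forall>x. \<bar>f x\<bar> \<le> max M 0" by (meson max.coboundedI1)
  thus ?thesis using that[of "max M 0"] by auto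
qed

lemma gambles_const[simp]: "(\<lambda>x. c) \<in> gambles"
  by (rule gamblesI[of _ "\<bar>c\<bar>"]) auto

lemma gambles_add: "f \<in> gambles \<Longrightarrow> g \<in> gambles \<Longrightarrow> (\<lambda>x. f x + g x) \<in> gambles"
proof -
  assume "f \<in> gambles" "g \<in> gambles"
  then obtain M N where "\<And>x. \<bar>f x\<bar> \<le> M" "\<And>x. \<bar>g x\<bar> \<le> N" by (metis gamblesE)
  hence "\<And>x. \<bar>f x + g x\<bar> \<le> M + N" by (meson abs_triangle_ineq add_mono order_trans)
  thus ?thesis by (rule gamblesI)
qed

lemma gambles_scale: "f \<in> gambles \<Longrightarrow> (\<lambda>x. c * f x) \<in> gambles"
proof -
  assume "f \<in> gambles"
  then obtain M where "\<And>x. \<bar>f x\<bar> \<le> M" by (metis gamblesE)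
  hence "\<And>x. \<bar>c * f x\<bar> \<le> \<bar>c\<bar> * M" by (simp add: abs_mult mult_left_mono)
  thus ?thesis by (rule gamblesI)
qed

lemma gambles_uminus: "f \<in> gambles \<Longrightarrow> (\<lambda>x. - f x) \<in> gambles"
  using gambles_scale[of f "-1"] by simp

lemma gambles_diff: "f \<in> gambles \<Longrightarrow> g \<in> gambles \<Longrightarrow> (\<lambda>x. f x - g x) \<in> gambles"
  using gambles_add[of f "\<lambda>x. - g x"] gambles_uminus[of g] by simp

lemma gambles_mult: "f \<in> gambles \<Longrightarrow> g \<in> gambles \<Longrightarrow> (\<lambda>x. f x * g x) \<in> gambles"
proof -
  assume "f \<in> gambles" "g \<in> gambles"
  then obtain M N where "M \<ge> 0" "\<And>x. \<bar>f x\<bar> \<le> M" "\<And>x. \<bar>g x\<bar> \<le> N" by (metis gamblesE)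
  hence "\<And>x. \<bar>f x * g x\<bar> \<le> M * N" by (simp add: abs_mult mult_mono')
  thus ?thesis by (rule gamblesI)
qed

lemma gambles_comp: "f \<in> gambles \<Longrightarrow> (\<lambda>x. f (h x)) \<in> gambles"
  unfolding gambles_def by blast

lemma gambles_indicator[simp]: "indicator A \<in> gambles"
  by (rule gamblesI[of _ 1]) (simp add: indicator_def)

lemma gambles_sum: "finite I \<Longrightarrow> (\<And>i. i \<in> I \<Longrightarrow> f i \<in> gambles) \<Longrightarrow> (\<lambda>x. \<Sum>i\<in>I. f i x) \<in> gambles"
proof (induction I rule: finite_induct)
  case empty then show ?case by simp
next
  case (insert a I)
  then show ?case using gambles_add[of "f a" "\<lambda>x. \<Sum>i\<in>I. f i x"] by simp
qed

definition cd :: "('a \<Rightarrow> real) set \<Rightarrow> bool" where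
  "cd D \<longleftrightarrow> D \<subseteq> gambles \<and> pos_gambles \<subseteq> D \<and> (\<forall>f\<in>D. \<forall>g\<in>D. (\<lambda>x. f x + g x) \<in> D)
     \<and> (\<forall>f\<in>D. \<forall>t>0. (\<lambda>x. t * f x) \<in> D) \<and> (\<forall>f\<in>D. \<not> (\<forall>x. f x \<le> 0))"

lemma coherent_cd: "coherent_dgs D \<Longrightarrow> cd D"
  unfolding coherent_dgs_def cd_def pos_gambles_def by blast

lemma pos_gamblesI: "f \<in> gambles \<Longrightarrow> (\<And>x. f x \<ge> 0) \<Longrightarrow> f z \<noteq> 0 \<Longrightarrow> f \<in> pos_gambles"
  unfolding pos_gambles_def by auto

lemma cd_add: "cd D \<Longrightarrow> f \<in> D \<Longrightarrow> g \<in> D \<Longrightarrow> (\<lambda>x. f x + g x) \<in> D"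
  unfolding cd_def by blast
lemma cd_scale: "cd D \<Longrightarrow> f \<in> D \<Longrightarrow> t > 0 \<Longrightarrow> (\<lambda>x. t * f x) \<in> D"
  unfolding cd_def by blast
lemma cd_gamble: "cd D \<Longrightarrow> f \<in> D \<Longrightarrow> f \<in> gambles"
  unfolding cd_def by blast
lemma cd_pos: "cd D \<Longrightarrow> f \<in> pos_gambles \<Longrightarrow> f \<in> D"
  unfolding cd_def by blast
lemma cd_nonpos: "cd D \<Longrightarrow> f \<in> D \<Longrightarrow> (\<And>x. f x \<le> 0) \<Longrightarrow> False"
  unfolding cd_def by blast

lemma cd_const: "cd D \<Longrightarrow> c > 0 \<Longrightarrow> (\<lambda>x. c) \<in> D"
  by (rule cd_pos, assumption, rule pos_gamblesI) auto

lemma cd_up: assumes "cd D" "f \<in> D" "g \<in> gambles" "\<And>x. f x \<le> g x" shows "g \<in> D"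
proof (cases "\<forall>x. g x = f x")
  case True
  hence "g = f" by auto
  thus ?thesis using assms by simp
next
  case False
  then obtain x0 where x0: "g x0 \<noteq> f x0" by auto
  have "(\<lambda>x. g x - f x) \<in> pos_gambles"
    by (rule pos_gamblesI[where z=x0]) (use assms x0 gambles_diff[OF assms(3) cd_gamble[OF assms(1,2)]] in auto)
  hence "(\<lambda>x. g x - f x) \<in> D" using assms(1) cd_pos by blast
  from cd_add[OF assms(1) assms(2) this] show ?thesis by simp
qed

section \<open>The lower prevision R\<close>

definition R :: "('a \<Rightarrow> real) set \<Rightarrow> ('a \<Rightarrow> real) \<Rightarrow> real" where
  "R D f = Sup {mu. (\<lambda>x. f x - mu) \<in> D}"

lemma S_nonempty: assumes "cd D" "f \<in> gambles" shows "\<exists>mu. (\<lambda>x. f x - mu) \<in> D"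
proof -
  obtain M where M: "\<And>x. \<bar>f x\<bar> \<le> M" using assms(2) by (metis gamblesE)
  have "(\<lambda>x. f x - (- M - 1)) \<in> pos_gambles"
  proof (rule pos_gamblesI[where z=undefined])
    have "\<And>x. f x - (- M - 1) \<ge> 1" using M by (smt (verit))
    thus "\<And>x. f x - (- M - 1) \<ge> 0" "f undefined - (- M - 1) \<noteq> 0" by (smt (verit))+
  qed (use assms(2) gambles_diff[of f "\<lambda>x. - M - 1"] in auto)
  thus ?thesis using assms(1) cd_pos by blast
qed

lemma S_bdd: assumes "cd D" "f \<in> gambles" "(\<lambda>x. f x - mu) \<in> D" "\<And>x. f x \<le> b" shows "mu \<le> b"
proof (rule ccontr)
  assume "\<not> mu \<le> b"
  hence "\<And>x. f x - mu \<le> 0" using assms(4) by (smt (verit))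
  thus False using cd_nonpos[OF assms(1) assms(3)] by blast
qed

lemma S_bdd_above: assumes "cd D" "f \<in> gambles" shows "bdd_above {mu. (\<lambda>x. f x - mu) \<in> D}"
proof -
  obtain M where M: "\<And>x. \<bar>f x\<bar> \<le> M" using assms(2) by (metis gamblesE)
  hence "\<And>x. f x \<le> M" by (smt (verit))
  thus ?thesis using S_bdd[OF assms] unfolding bdd_above_def by blast
qed

lemma R_ge: "cd D \<Longrightarrow> f \<in> gambles \<Longrightarrow> (\<lambda>x. f x - mu) \<in> D \<Longrightarrow> mu \<le> R D f"
  unfolding R_def by (rule cSup_upper) (auto intro: S_bdd_above)

lemma R_less: assumes "cd D" "f \<in> gambles" "mu < R D f" shows "(\<lambda>x. f x - mu) \<in> D"
proof -
  have ne: "{mu. (\<lambda>x. f x - mu) \<in> D} \<noteq> {}" using S_nonempty[OF assms(1,2)] by auto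
  obtain mu' where mu': "(\<lambda>x. f x - mu') \<in> D" "mu < mu'"
    using less_cSupE[OF assms(3)[unfolded R_def] ne] by auto
  have "(\<lambda>x. mu' - mu) \<in> D" using cd_const[OF assms(1)] mu' by simp
  from cd_add[OF assms(1) mu'(1) this] show ?thesis by simp
qed

lemma R_le_bound: assumes "cd D" "f \<in> gambles" "\<And>x. f x \<le> b" shows "R D f \<le> b"
  unfolding R_def by (rule cSup_least) (use S_nonempty[OF assms(1,2)] S_bdd[OF assms(1,2) _ assms(3)] in auto)

lemma R_ge_bound: assumes "cd D" "f \<in> gambles" "\<And>x. a \<le> f x" shows "a \<le> R D f"
proof (rule field_le_epsilon)
  fix e :: real assume e: "e > 0"
  have "(\<lambda>x. f x - (a - e)) \<in> pos_gambles"
    apply (rule pos_gamblesI[where z=undefined])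
    using assms(2) gambles_diff[of f "\<lambda>x. a - e"] assms(3) e by (auto simp: algebra_simps)
     (smt (verit) assms(3))+
  hence "a - e \<le> R D f" using R_ge[OF assms(1,2)] cd_pos[OF assms(1)] by blast
  thus "a \<le> R D f + e" by simp
qed

lemma R_D: "cd D \<Longrightarrow> f \<in> D \<Longrightarrow> 0 \<le> R D f"
  using R_ge[of D f 0] cd_gamble by auto

lemma R_mono: assumes "cd D" "f \<in> gambles" "g \<in> gambles" "\<And>x. f x \<le> g x" shows "R D f \<le> R D g"
proof (rule field_le_epsilon)
  fix e :: real assume e: "e > 0"
  have "(\<lambda>x. f x - (R D f - e)) \<in> D" using R_less[OF assms(1,2)] e by simp
  hence "(\<lambda>x. g x - (R D f - e)) \<in> D"
    by (rule cd_up[OF assms(1)]) (use assms gambles_diff[OF assms(3) gambles_const] in auto)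
  hence "R D f - e \<le> R D g" using R_ge[OF assms(1,3)] by blast
  thus "R D f \<le> R D g + e" by simp
qed

lemma R_superadd: assumes "cd D" "f \<in> gambles" "g \<in> gambles"
  shows "R D f + R D g \<le> R D (\<lambda>x. f x + g x)"
proof (rule field_le_epsilon)
  fix e :: real assume e: "e > 0"
  have 1: "(\<lambda>x. f x - (R D f - e/2)) \<in> D" using R_less[OF assms(1,2)] e by simp
  have 2: "(\<lambda>x. g x - (R D g - e/2)) \<in> D" using R_less[OF assms(1,3)] e by simp
  have "(\<lambda>x. (f x + g x) - (R D f + R D g - e)) \<in> D"
    using cd_add[OF assms(1) 1 2] by (simp add: algebra_simps)
  hence "R D f + R D g - e \<le> R D (\<lambda>x. f x + g x)"
    using R_ge[OF assms(1) gambles_add[OF assms(2,3)]] by blast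
  thus "R D f + R D g \<le> R D (\<lambda>x. f x + g x) + e" by simp
qed

lemma R_scale_ge: assumes "cd D" "f \<in> gambles" "t > 0"
  shows "t * R D f \<le> R D (\<lambda>x. t * f x)"
proof (rule field_le_epsilon)
  fix e :: real assume e: "e > 0"
  have 1: "(\<lambda>x. f x - (R D f - e/t)) \<in> D" using R_less[OF assms(1,2)] e assms(3) by simp
  have "(\<lambda>x. t * f x - (t * R D f - e)) \<in> D"
    using cd_scale[OF assms(1) 1 assms(3)] assms(3) by (simp add: algebra_simps)
  hence "t * R D f - e \<le> R D (\<lambda>x. t * f x)"
    using R_ge[OF assms(1) gambles_scale[OF assms(2)]] by blast
  thus "t * R D f \<le> R D (\<lambda>x. t * f x) + e" by simp
qed

lemma R_scale: assumes "cd D" "f \<in> gambles" "t > 0"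
  shows "R D (\<lambda>x. t * f x) = t * R D f"
proof -
  have a: "t * R D f \<le> R D (\<lambda>x. t * f x)" by (rule R_scale_ge[OF assms])
  have "(1/t) * R D (\<lambda>x. t * f x) \<le> R D (\<lambda>x. (1/t) * (t * f x))"
    by (rule R_scale_ge[OF assms(1) gambles_scale[OF assms(2)]]) (use assms in simp)
  also have "(\<lambda>x. (1/t) * (t * f x)) = f" using assms(3) by auto
  finally have "R D (\<lambda>x. t * f x) \<le> t * R D f" using assms(3) by (simp add: field_simps)
  thus ?thesis using a by simp
qed

lemma R_trans_ge: assumes "cd D" "f \<in> gambles"
  shows "R D f + c \<le> R D (\<lambda>x. f x + c)"
proof (rule field_le_epsilon)
  fix e :: real assume e: "e > 0"
  have 1: "(\<lambda>x. f x - (R D f - e)) \<in> D" using R_less[OF assms(1,2)] e by simp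
  hence "(\<lambda>x. (f x + c) - (R D f + c - e)) \<in> D" by (simp add: algebra_simps)
  hence "R D f + c - e \<le> R D (\<lambda>x. f x + c)"
    using R_ge[OF assms(1) gambles_add[OF assms(2) gambles_const]] by blast
  thus "R D f + c \<le> R D (\<lambda>x. f x + c) + e" by simp
qed

lemma R_trans: assumes "cd D" "f \<in> gambles"
  shows "R D (\<lambda>x. f x + c) = R D f + c"
proof -
  have "R D (\<lambda>x. f x + c) + (-c) \<le> R D (\<lambda>x. (f x + c) + (-c))"
    by (rule R_trans_ge[OF assms(1) gambles_add[OF assms(2) gambles_const]])
  thus ?thesis using R_trans_ge[OF assms, of c] by simp
qed

lemma R_zero: "cd D \<Longrightarrow> R D (\<lambda>x. 0) = 0"
  using R_le_bound[of D "\<lambda>x. 0" 0] R_ge_bound[of D "\<lambda>x. 0" 0] by simp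

lemma R_neg: assumes "cd D" "f \<in> gambles" shows "R D f + R D (\<lambda>x. - f x) \<le> 0"
  using R_superadd[OF assms gambles_uminus[OF assms(2)]] R_zero[OF assms(1)] by simp

lemma R_scale_nonneg: assumes "cd D" "f \<in> gambles" "t \<ge> 0"
  shows "R D (\<lambda>x. t * f x) = t * R D f"
  using R_scale[OF assms(1,2)] R_zero[OF assms(1)] assms(3) by (cases "t = 0") auto

lemma R_scale_neg: assumes "cd D" "f \<in> gambles" "t \<le> 0"
  shows "R D (\<lambda>x. t * f x) = (- t) * R D (\<lambda>x. - f x)"
  using R_scale_nonneg[OF assms(1) gambles_uminus[OF assms(2)], of "-t"] assms(3) by simp

lemma R_cont: assumes "cd D" "f \<in> gambles" "g \<in> gambles" "\<And>x. \<bar>f x - g x\<bar> \<le> e"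
  shows "R D g - e \<le> R D f"
proof -
  have "R D (\<lambda>x. g x + (-e)) \<le> R D f"
    by (rule R_mono[OF assms(1) gambles_add[OF assms(3) gambles_const] assms(2)])
       (smt (verit) assms(4))
  thus ?thesis using R_trans[OF assms(1,3), of "-e"] by simp
qed

lemma lpr_R: assumes "cd D" "f \<in> gambles" shows "lpr D f UNIV = ereal (R D f)"
proof -
  let ?S = "{mu. (\<lambda>x. f x - mu) \<in> D}"
  have "lpr D f UNIV = Sup (ereal ` ?S)" unfolding lpr_def by simp
  also have "\<dots> = ereal (R D f)"
  proof (rule antisym)
    show "Sup (ereal ` ?S) \<le> ereal (R D f)"
      by (rule SUP_least) (use R_ge[OF assms] in auto)
    show "ereal (R D f) \<le> Sup (ereal ` ?S)"
    proof (rule ereal_le_epsilon2)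
      fix e :: real assume e: "0 < e"
      have "R D f - e \<in> ?S" using R_less[OF assms] e by simp
      hence "ereal (R D f - e) \<le> Sup (ereal ` ?S)" by (rule SUP_upper)
      moreover have "ereal (R D f) \<le> ereal (R D f - e) + ereal e" by simp
      ultimately show "ereal (R D f) \<le> Sup (ereal ` ?S) + ereal e"
        by (meson add_right_mono order_trans)
    qed
  qed
  finally show ?thesis .
qed



lemma posi_base: "f \<in> A \<Longrightarrow> f \<in> posi A"
  unfolding posi_def
  by (rule CollectI, rule exI[of _ 1], rule conjI, simp, rule exI[of _ "\<lambda>_. 1"], rule exI[of _ "\<lambda>_. f"]) auto

lemma posi_scale: assumes "f \<in> posi A" "t > 0" shows "(\<lambda>x. t * f x) \<in> posi A"
proof -
  obtain n lam fs where n: "(n::nat) \<ge> 1" "\<forall>i<n. lam i > (0::real) \<and> fs i \<in> A" "f = (\<lambda>x. \<Sum>i<n. lam i * fs i x)"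
    using assms(1) unfolding posi_def by blast
  show ?thesis unfolding posi_def
    apply (rule CollectI, rule exI[of _ n], rule conjI, fact, rule exI[of _ "\<lambda>i. t * lam i"], rule exI[of _ fs])
    using n assms(2) by (auto simp: sum_distrib_left mult.assoc)
qed

lemma posi_add: assumes "f \<in> posi A" "g \<in> posi A" shows "(\<lambda>x. f x + g x) \<in> posi A"
proof -
  obtain n lam fs where n: "(n::nat) \<ge> 1" "\<forall>i<n. lam i > (0::real) \<and> fs i \<in> A" "f = (\<lambda>x. \<Sum>i<n. lam i * fs i x)"
    using assms(1) unfolding posi_def by blast
  obtain m lam2 fs2 where m: "(m::nat) \<ge> 1" "\<forall>i<m. lam2 i > (0::real) \<and> fs2 i \<in> A" "g = (\<lambda>x. \<Sum>i<m. lam2 i * fs2 i x)"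
    using assms(2) unfolding posi_def by blast
  define L where "L i = (if i < n then lam i else lam2 (i - n))" for i
  define F where "F i = (if i < n then fs i else fs2 (i - n))" for i
  have "\<forall>i<n+m. L i > 0 \<and> F i \<in> A" using n m unfolding L_def F_def by auto
  moreover have "(\<lambda>x. f x + g x) = (\<lambda>x. \<Sum>i<n+m. L i * F i x)"
  proof
    fix x
    have "(\<Sum>i<n+m. L i * F i x) = (\<Sum>i<n. L i * F i x) + (\<Sum>i=n..<n+m. L i * F i x)"
    proof -
      have "{..<n+m} = {..<n} \<union> {n..<n+m}" by auto
      moreover have "(\<Sum>i\<in>{..<n} \<union> {n..<n+m}. L i * F i x) = (\<Sum>i<n. L i * F i x) + (\<Sum>i=n..<n+m. L i * F i x)"
        by (rule sum.union_disjoint) auto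
      ultimately show ?thesis by simp
    qed
    also have "(\<Sum>i<n. L i * F i x) = f x" using n(3) unfolding L_def F_def by simp
    also have "(\<Sum>i=n..<n+m. L i * F i x) = (\<Sum>i=0..<m. L (i + n) * F (i + n) x)"
      using sum.shift_bounds_nat_ivl[of "\<lambda>i. L i * F i x" 0 n m] by (simp add: add.commute)
    also have "\<dots> = g x" using m(3) unfolding L_def F_def by (simp add: atLeast0LessThan)
    finally show "f x + g x = (\<Sum>i<n+m. L i * F i x)" by simp
  qed
  ultimately show ?thesis unfolding posi_def using n(1) by (auto intro!: exI[of _ "n+m"])
qed

lemma cd_sum_in: assumes "cd D" shows "(n::nat) \<ge> 1 \<Longrightarrow> (\<forall>i<n. lam i > (0::real) \<and> fs i \<in> D) \<Longrightarrow> (\<lambda>x. \<Sum>i<n. lam i * fs i x) \<in> D"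
proof (induction n)
  case 0 then show ?case by simp
next
  case (Suc n)
  show ?case
  proof (cases "n = 0")
    case True
    then show ?thesis using Suc.prems cd_scale[OF assms] by simp
  next
    case False
    hence "(\<lambda>x. \<Sum>i<n. lam i * fs i x) \<in> D" using Suc by auto
    moreover have "(\<lambda>x. lam n * fs n x) \<in> D" using Suc.prems cd_scale[OF assms] by simp
    ultimately show ?thesis using cd_add[OF assms] by simp
  qed
qed

lemma posi_subset: "cd D \<Longrightarrow> A \<subseteq> D \<Longrightarrow> posi A \<subseteq> D"
  unfolding posi_def using cd_sum_in by blast

lemma natext_pos: "f \<in> pos_gambles \<Longrightarrow> f \<in> natext_set A"
  unfolding natext_set_def by (rule posi_base) simp
lemma natext_base: "f \<in> A \<Longrightarrow> f \<in> natext_set A"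
  unfolding natext_set_def by (rule posi_base) simp
lemma natext_add: "f \<in> natext_set A \<Longrightarrow> g \<in> natext_set A \<Longrightarrow> (\<lambda>x. f x + g x) \<in> natext_set A"
  unfolding natext_set_def by (rule posi_add)
lemma natext_scale: "f \<in> natext_set A \<Longrightarrow> t > 0 \<Longrightarrow> (\<lambda>x. t * f x) \<in> natext_set A"
  unfolding natext_set_def by (rule posi_scale)

lemma natext_up: assumes "f \<in> natext_set A" "f \<in> gambles" "g \<in> gambles" "\<And>x. f x \<le> g x"
  shows "g \<in> natext_set A"
proof (cases "\<forall>x. g x = f x")
  case True
  hence "g = f" by auto
  thus ?thesis using assms by simp
next
  case False
  then obtain x0 where x0: "g x0 \<noteq> f x0" by auto
  have "(\<lambda>x. g x - f x) \<in> pos_gambles"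
    by (rule pos_gamblesI[where z=x0]) (use assms x0 gambles_diff[OF assms(3,2)] in auto)
  hence "(\<lambda>x. g x - f x) \<in> natext_set A" by (rule natext_pos)
  from natext_add[OF assms(1) this] show ?thesis by simp
qed

lemma natext_sum0: assumes "X \<in> natext_set A" "finite I" "\<And>i. i \<in> I \<Longrightarrow> f i \<in> natext_set A \<or> f i = (\<lambda>x. 0)"
  shows "(\<lambda>x. X x + (\<Sum>i\<in>I. f i x)) \<in> natext_set A"
  using assms(2,3)
proof (induction I rule: finite_induct)
  case empty then show ?case using assms(1) by simp
next
  case (insert a I)
  hence IH: "(\<lambda>x. X x + (\<Sum>i\<in>I. f i x)) \<in> natext_set A" by auto
  have "f a \<in> natext_set A \<or> f a = (\<lambda>x. 0)" using insert.prems by simp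
  then show ?case
  proof
    assume "f a \<in> natext_set A"
    from natext_add[OF IH this] show ?thesis using insert.hyps by (simp add: algebra_simps)
  next
    assume "f a = (\<lambda>x. 0)"
    thus ?thesis using IH insert.hyps by simp
  qed
qed

lemma cd_natext: assumes "cd D" "A \<subseteq> D" shows "cd (natext_set A)"
proof -
  have sub: "natext_set A \<subseteq> D" unfolding natext_set_def
    by (rule posi_subset[OF assms(1)]) (use assms(2) cd_pos[OF assms(1)] in auto)
  have g: "natext_set A \<subseteq> gambles" using sub assms(1) unfolding cd_def by blast
  have np: "\<forall>f\<in>natext_set A. \<not> (\<forall>x. f x \<le> 0)" using sub cd_nonpos[OF assms(1)] by blast
  show ?thesis unfolding cd_def
  proof (intro conjI)
    show "pos_gambles \<subseteq> natext_set A" using natext_pos by blast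
    show "\<forall>f\<in>natext_set A. \<forall>g\<in>natext_set A. (\<lambda>x. f x + g x) \<in> natext_set A" using natext_add by blast
    show "\<forall>f\<in>natext_set A. \<forall>t>0. (\<lambda>x. t * f x) \<in> natext_set A" using natext_scale by blast
  qed (use g np in auto)
qed

lemma cd_natext_clp: assumes "C \<subseteq> Cdom" "coherent_clp C P" shows "cd (natext_clp_set C P)"
proof -
  obtain D where D: "coherent_dgs D" "\<forall>(f, B) \<in> C. P f B = lpr D f B"
    using assms(2) unfolding coherent_clp_def by blast
  have cdD: "cd D" using D(1) by (rule coherent_cd)
  show ?thesis unfolding natext_clp_set_def
  proof (rule cd_natext[OF cdD], rule subsetI)
    fix h assume "h \<in> {h. \<exists>f B mu. (f, B) \<in> C \<and> ereal mu < P f B \<and> h = (\<lambda>x. (f x - mu) * indicator B x)}"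
    then obtain f B mu where h: "(f, B) \<in> C" "ereal mu < P f B" "h = (\<lambda>x. (f x - mu) * indicator B x)"
      by blast
    have fB: "f \<in> gambles" "B \<noteq> {}" using h(1) assms(1) unfolding Cdom_def by auto
    have "ereal mu < Sup (ereal ` {mu. (\<lambda>x. (f x - mu) * indicator B x) \<in> D})"
      using h(1,2) D(2) unfolding lpr_def by auto
    then obtain mu' where mu': "(\<lambda>x. (f x - mu') * indicator B x) \<in> D" "mu < mu'"
      by (auto simp: less_SUP_iff)
    obtain b where b: "b \<in> B" using fB(2) by auto
    have "(\<lambda>x. (mu' - mu) * indicator B x) \<in> pos_gambles"
      by (rule pos_gamblesI[where z=b]) (use mu' b gambles_scale[OF gambles_indicator] in auto)
    hence "(\<lambda>x. (mu' - mu) * indicator B x) \<in> D" using cdD cd_pos by blast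
    from cd_add[OF cdD mu'(1) this] show "h \<in> D" unfolding h(3) by (simp add: algebra_simps)
  qed
qed



lemma ext_step:
  fixes psi :: "nat \<Rightarrow> 'a \<Rightarrow> real" and q :: "nat \<Rightarrow> real" and n :: nat
  assumes cdD: "cd D" and gam: "\<And>j. psi j \<in> gambles"
    and IH: "\<And>c. R D (\<lambda>x. \<Sum>j<n. c j * psi j x) \<le> (\<Sum>j<n. c j * q j)"
  shows "\<exists>v. \<forall>c. R D (\<lambda>x. \<Sum>j<Suc n. c j * psi j x) \<le> (\<Sum>j<Suc n. c j * (q(n:=v)) j)"
proof -
  define S where "S c = (\<lambda>x. \<Sum>j<n. c j * psi j x)" for c
  define Q where "Q c = (\<Sum>j<n. c j * q j)" for c
  have Sg: "S c \<in> gambles" for c unfolding S_def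
    by (rule gambles_sum) (auto intro: gambles_scale gam)
  have Sp: "(\<lambda>x. S c x + psi n x) \<in> gambles" for c by (rule gambles_add[OF Sg gam])
  have Sm: "(\<lambda>x. S c x - psi n x) \<in> gambles" for c by (rule gambles_diff[OF Sg gam])
  define L where "L c = R D (\<lambda>x. S c x + psi n x) - Q c" for c
  define U where "U c = Q c - R D (\<lambda>x. S c x - psi n x)" for c
  have LU: "L c \<le> U c'" for c c'
  proof -
    have "R D (\<lambda>x. S c x + psi n x) + R D (\<lambda>x. S c' x - psi n x)
          \<le> R D (\<lambda>x. (S c x + psi n x) + (S c' x - psi n x))"
      by (rule R_superadd[OF cdD Sp Sm])
    also have "(\<lambda>x. (S c x + psi n x) + (S c' x - psi n x)) = S (\<lambda>j. c j + c' j)"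
      unfolding S_def by (auto simp: algebra_simps sum.distrib)
    also have "R D (S (\<lambda>j. c j + c' j)) \<le> Q (\<lambda>j. c j + c' j)"
      using IH[of "\<lambda>j. c j + c' j"] unfolding S_def Q_def by simp
    also have "\<dots> = Q c + Q c'" unfolding Q_def by (simp add: algebra_simps sum.distrib)
    finally show ?thesis unfolding L_def U_def by simp
  qed
  define v where "v = Sup (range L)"
  have bdd: "bdd_above (range L)" using LU[of _ "\<lambda>_. 0"] by (auto intro!: bdd_aboveI)
  have Lv: "L c \<le> v" for c unfolding v_def by (rule cSup_upper[OF _ bdd]) simp
  have vU: "v \<le> U c" for c unfolding v_def by (rule cSup_least) (use LU in auto)
  show ?thesis
  proof (rule exI[of _ v], intro allI)
    fix c :: "nat \<Rightarrow> real"
    let ?t = "c n"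
    have seq: "(\<lambda>x. \<Sum>j<Suc n. c j * psi j x) = (\<lambda>x. S c x + ?t * psi n x)"
      unfolding S_def by simp
    have qeq: "(\<Sum>j<Suc n. c j * (q(n:=v)) j) = Q c + ?t * v"
    proof -
      have "(\<Sum>j<n. c j * (q(n:=v)) j) = Q c" unfolding Q_def by (rule sum.cong) auto
      thus ?thesis by simp
    qed
    consider "?t = 0" | "?t > 0" | "?t < 0" by linarith
    then show "R D (\<lambda>x. \<Sum>j<Suc n. c j * psi j x) \<le> (\<Sum>j<Suc n. c j * (q(n:=v)) j)"
    proof cases
      case 1
      then show ?thesis unfolding seq qeq using IH[of c] unfolding S_def Q_def by simp
    next
      case 2
      define c' where "c' j = c j / ?t" for j
      have S1: "S c x = ?t * S c' x" for x unfolding S_def c'_def sum_distrib_left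
        by (rule sum.cong) (use 2 in auto)
      have Q1: "Q c = ?t * Q c'" unfolding Q_def c'_def sum_distrib_left
        by (rule sum.cong) (use 2 in auto)
      have "(\<lambda>x. S c x + ?t * psi n x) = (\<lambda>x. ?t * (S c' x + psi n x))"
        using S1 by (auto simp: algebra_simps)
      hence "R D (\<lambda>x. S c x + ?t * psi n x) = ?t * R D (\<lambda>x. S c' x + psi n x)"
        using R_scale[OF cdD Sp 2] by simp
      also have "\<dots> = ?t * (L c' + Q c')" unfolding L_def by simp
      also have "\<dots> \<le> ?t * (v + Q c')" using Lv[of c'] 2 by (simp add: mult_left_mono)
      also have "\<dots> = Q c + ?t * v" using Q1 by (simp add: algebra_simps)
      finally show ?thesis unfolding seq qeq .
    next
      case 3
      define s where "s = - ?t"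
      have s: "s > 0" using 3 s_def by simp
      define c' where "c' j = c j / s" for j
      have S1: "S c x = s * S c' x" for x unfolding S_def c'_def sum_distrib_left
        by (rule sum.cong) (use s in auto)
      have Q1: "Q c = s * Q c'" unfolding Q_def c'_def sum_distrib_left
        by (rule sum.cong) (use s in auto)
      have "(\<lambda>x. S c x + ?t * psi n x) = (\<lambda>x. s * (S c' x - psi n x))"
        using S1 s_def by (auto simp: algebra_simps)
      hence "R D (\<lambda>x. S c x + ?t * psi n x) = s * R D (\<lambda>x. S c' x - psi n x)"
        using R_scale[OF cdD Sm s] by simp
      also have "\<dots> = s * (Q c' - U c')" unfolding U_def by simp
      also have "\<dots> \<le> s * (Q c' - v)" using vU[of c'] s by (simp add: mult_left_mono)
      also have "\<dots> = Q c + ?t * v" using Q1 s_def by (simp add: algebra_simps)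
      finally show ?thesis unfolding seq qeq .
    qed
  qed
qed

lemma ext_all:
  fixes psi :: "nat \<Rightarrow> 'a \<Rightarrow> real" and m :: nat
  assumes cdD: "cd D" and gam: "\<And>j. psi j \<in> gambles"
    and base: "\<And>c. R D (\<lambda>x. c * psi 0 x) \<le> c * qz"
  shows "\<exists>q. q 0 = qz \<and> (\<forall>c. R D (\<lambda>x. \<Sum>j<Suc m. c j * psi j x) \<le> (\<Sum>j<Suc m. c j * q j))"
proof (induction m)
  case 0
  show ?case by (rule exI[of _ "\<lambda>_. qz"]) (use base in simp)
next
  case (Suc m)
  then obtain q where q: "q 0 = qz" "\<And>c. R D (\<lambda>x. \<Sum>j<Suc m. c j * psi j x) \<le> (\<Sum>j<Suc m. c j * q j)"
    by blast
  from ext_step[OF cdD gam q(2)] obtain v where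
    "\<forall>c. R D (\<lambda>x. \<Sum>j<Suc (Suc m). c j * psi j x) \<le> (\<Sum>j<Suc (Suc m). c j * (q(Suc m:=v)) j)"
    by blast
  thus ?case using q(1) by (intro exI[of _ "q(Suc m:=v)"]) simp
qed

lemma base_ok:
  assumes cdD: "cd D" and f: "f \<in> gambles" and q: "R D f \<le> q0" "q0 \<le> - R D (\<lambda>x. - f x)"
  shows "R D (\<lambda>x. c * f x) \<le> c * q0"
proof (cases "c \<ge> 0")
  case True
  thus ?thesis using R_scale_nonneg[OF cdD f True] q(1) by (simp add: mult_left_mono)
next
  case False
  hence "R D (\<lambda>x. c * f x) = (-c) * R D (\<lambda>x. - f x)" using R_scale_neg[OF cdD f] by simp
  also have "\<dots> \<le> (-c) * (- q0)" using q(2) False by (intro mult_left_mono) auto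
  finally show ?thesis by simp
qed

lemma cd_sum_cases:
  fixes n :: nat
  assumes cdD: "cd D"
  shows "(\<And>i. i < n \<Longrightarrow> K i \<Longrightarrow> c i \<ge> 0 \<and> f i \<in> D) \<Longrightarrow>
    (\<lambda>y. \<Sum>i<n. if K i then c i * f i y else 0) \<in> D \<or> (\<lambda>y. \<Sum>i<n. if K i then c i * f i y else 0) = (\<lambda>y. 0)"
proof (induction n)
  case 0 then show ?case by simp
next
  case (Suc n)
  have IH: "(\<lambda>y. \<Sum>i<n. if K i then c i * f i y else 0) \<in> D \<or> (\<lambda>y. \<Sum>i<n. if K i then c i * f i y else 0) = (\<lambda>y. 0)"
    using Suc by auto
  have new: "(\<lambda>y. if K n then c n * f n y else 0) \<in> D \<or> (\<lambda>y. if K n then c n * f n y else 0) = (\<lambda>y. 0)"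
  proof (cases "K n \<and> c n > 0")
    case True
    then show ?thesis using Suc.prems[of n] cd_scale[OF cdD] by auto
  next
    case False
    hence "\<not> K n \<or> c n = 0" using Suc.prems[of n] by force
    then show ?thesis by auto
  qed
  have eq: "(\<lambda>y. \<Sum>i<Suc n. if K i then c i * f i y else 0)
     = (\<lambda>y. (\<Sum>i<n. if K i then c i * f i y else 0) + (if K n then c n * f n y else 0))" by simp
  show ?case using IH new
  proof (elim disjE)
    assume a: "(\<lambda>y. \<Sum>i<n. if K i then c i * f i y else 0) \<in> D" and b: "(\<lambda>y. if K n then c n * f n y else 0) \<in> D"
    show ?thesis using cd_add[OF cdD a b] by simp
  next
    assume a: "(\<lambda>y. \<Sum>i<n. if K i then c i * f i y else 0) \<in> D" and b: "(\<lambda>y. if K n then c n * f n y else 0) = (\<lambda>y. 0)"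
    have "\<And>y. (if K n then c n * f n y else 0) = 0" using b by meson
    then show ?thesis using a by simp
  next
    assume a: "(\<lambda>y. \<Sum>i<n. if K i then c i * f i y else 0) = (\<lambda>y. 0)" and b: "(\<lambda>y. if K n then c n * f n y else 0) \<in> D"
    have "\<And>y. (\<Sum>i<n. if K i then c i * f i y else 0) = 0" using a by meson
    then show ?thesis using b by simp
  next
    assume a: "(\<lambda>y. \<Sum>i<n. if K i then c i * f i y else 0) = (\<lambda>y. 0)" and b: "(\<lambda>y. if K n then c n * f n y else 0) = (\<lambda>y. 0)"
    have "\<And>y. (\<Sum>i<n. if K i then c i * f i y else 0) = 0" using a by meson
    moreover have "\<And>y. (if K n then c n * f n y else 0) = 0" using b by meson
    ultimately show ?thesis by simp
  qed
qed



lemma prod_dgs_elems: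
  assumes "F \<in> prod_dgs B1 B2 D1 D2"
  obtains n :: nat and lam fs where "n \<ge> 1" "\<And>i. i < n \<Longrightarrow> lam i > (0::real)"
    "\<And>i. i < n \<Longrightarrow> (\<exists>f2 E1. f2 \<in> D2 \<and> E1 \<in> B1 \<union> {UNIV} \<and> fs i = (\<lambda>(x, y). f2 y * indicator E1 x))
         \<or> (\<exists>f1 E2. f1 \<in> D1 \<and> E2 \<in> B2 \<union> {UNIV} \<and> fs i = (\<lambda>(x, y). f1 x * indicator E2 y))
         \<or> fs i \<in> pos_gambles"
    "F = (\<lambda>z. \<Sum>i<n. lam i * fs i z)"
proof -
  from assms obtain n :: nat and lam fs where "n \<ge> 1" "\<forall>i<n. lam i > (0::real) \<and> fs i \<in>
      ({h. \<exists>f2 E1. f2 \<in> D2 \<and> E1 \<in> B1 \<union> {UNIV} \<and> h = (\<lambda>(x, y). f2 y * indicator E1 x)} \<union>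
      {h. \<exists>f1 E2. f1 \<in> D1 \<and> E2 \<in> B2 \<union> {UNIV} \<and> h = (\<lambda>(x, y). f1 x * indicator E2 y)}) \<union> pos_gambles"
    "F = (\<lambda>z. \<Sum>i<n. lam i * fs i z)"
    unfolding prod_dgs_def natext_set_def posi_def by blast
  note h = this
  show ?thesis
  proof (rule that[of n lam fs])
    fix i assume i: "i < n"
    from h(2) i show "lam i > 0" by blast
    from h(2) i have "fs i \<in> ({h. \<exists>f2 E1. f2 \<in> D2 \<and> E1 \<in> B1 \<union> {UNIV} \<and> h = (\<lambda>(x, y). f2 y * indicator E1 x)} \<union>
      {h. \<exists>f1 E2. f1 \<in> D1 \<and> E2 \<in> B2 \<union> {UNIV} \<and> h = (\<lambda>(x, y). f1 x * indicator E2 y)}) \<union> pos_gambles" by blast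
    thus "(\<exists>f2 E1. f2 \<in> D2 \<and> E1 \<in> B1 \<union> {UNIV} \<and> fs i = (\<lambda>(x, y). f2 y * indicator E1 x))
         \<or> (\<exists>f1 E2. f1 \<in> D1 \<and> E2 \<in> B2 \<union> {UNIV} \<and> fs i = (\<lambda>(x, y). f1 x * indicator E2 y))
         \<or> fs i \<in> pos_gambles" by (simp only: Un_iff mem_Collect_eq disj_assoc)
  qed (use h in auto)
qed

lemma LE:
  fixes psi0 :: "'a \<Rightarrow> real" and t :: "'b \<Rightarrow> real"
  assumes cd1: "cd D1" and cd2: "cd D2" and psi0: "psi0 \<in> gambles" and tg: "t \<in> gambles"
    and q0: "R D1 psi0 \<le> q0" "q0 \<le> - R D1 (\<lambda>x. - psi0 x)"
    and mem: "(\<lambda>z. psi0 (fst z) * t (snd z) - nu) \<in> prod_dgs B1 B2 D1 D2"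
  shows "nu \<le> R D2 (\<lambda>y. q0 * t y)"
proof -
  obtain n :: nat and lam fs where n: "n \<ge> 1" and lam: "\<And>i. i < n \<Longrightarrow> lam i > (0::real)"
    and fs: "\<And>i. i < n \<Longrightarrow> (\<exists>f2 E1. f2 \<in> D2 \<and> E1 \<in> B1 \<union> {UNIV} \<and> fs i = (\<lambda>(x, y). f2 y * indicator E1 x))
         \<or> (\<exists>f1 E2. f1 \<in> D1 \<and> E2 \<in> B2 \<union> {UNIV} \<and> fs i = (\<lambda>(x, y). f1 x * indicator E2 y))
         \<or> fs i \<in> pos_gambles"
    and F: "(\<lambda>z. psi0 (fst z) * t (snd z) - nu) = (\<lambda>z. \<Sum>i<n. lam i * fs i z)"
    using prod_dgs_elems[OF mem] by blast
  define P where "P i p \<longleftrightarrow> fst p \<in> gambles \<and> 0 \<le> R D1 (fst p) \<and> (fst (snd p) \<longrightarrow> snd (snd p) \<in> D2)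
       \<and> (\<not> fst (snd p) \<longrightarrow> (\<forall>y. 0 \<le> snd (snd p) y)) \<and> (\<forall>x y. fst p x * snd (snd p) y \<le> fs i (x, y))" for i p
  have ex: "\<exists>p. P i p" if i: "i < n" for i
  proof -
    from fs[OF i] consider
      (a) f2 E1 where "f2 \<in> D2" "fs i = (\<lambda>(x, y). f2 y * indicator E1 x)"
    | (b) f1 E2 where "f1 \<in> D1" "fs i = (\<lambda>(x, y). f1 x * indicator E2 y)"
    | (c) "fs i \<in> pos_gambles" by blast
    then show ?thesis
    proof cases
      case a
      show ?thesis unfolding P_def
        by (rule exI[of _ "(indicator E1, True, f2)"])
           (use a R_ge_bound[OF cd1 gambles_indicator, of 0 E1] in auto)
    next
      case b
      show ?thesis unfolding P_def
        by (rule exI[of _ "(f1, False, indicator E2)"])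
           (use b R_D[OF cd1] cd_gamble[OF cd1] in auto)
    next
      case c
      show ?thesis unfolding P_def
        by (rule exI[of _ "(\<lambda>_. 0, False, \<lambda>_. 0)"])
           (use c R_zero[OF cd1] in \<open>auto simp: pos_gambles_def\<close>)
    qed
  qed
  hence "\<forall>i\<in>{..<n}. \<exists>p. P i p" by blast
  then obtain p where pP: "\<forall>i\<in>{..<n}. P i (p i)" using bchoice[of "{..<n}" P] by blast
  have p: "\<And>i. i < n \<Longrightarrow> fst (p i) \<in> gambles \<and> 0 \<le> R D1 (fst (p i)) \<and> (fst (snd (p i)) \<longrightarrow> snd (snd (p i)) \<in> D2)
       \<and> (\<not> fst (snd (p i)) \<longrightarrow> (\<forall>y. 0 \<le> snd (snd (p i)) y)) \<and> (\<forall>x y. fst (p i) x * snd (snd (p i)) y \<le> fs i (x, y))"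
    using pP unfolding P_def by blast
  define Phi where "Phi i = fst (p i)" for i
  define K where "K i = fst (snd (p i))" for i
  define Al where "Al i = snd (snd (p i))" for i
  have Phig: "\<And>i. i < n \<Longrightarrow> Phi i \<in> gambles" and PhiR: "\<And>i. i < n \<Longrightarrow> 0 \<le> R D1 (Phi i)"
    and AlK: "\<And>i. i < n \<Longrightarrow> K i \<Longrightarrow> Al i \<in> D2"
    and AlnK: "\<And>i y. i < n \<Longrightarrow> \<not> K i \<Longrightarrow> 0 \<le> Al i y"
    and Pfs: "\<And>i x y. i < n \<Longrightarrow> Phi i x * Al i y \<le> fs i (x, y)"
    using p unfolding Phi_def K_def Al_def by blast+
  define psi where "psi j = (if j = 0 then psi0 else if j - 1 < n then Phi (j - 1) else (\<lambda>_. 0))" for j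
  have psig: "psi j \<in> gambles" for j
  proof (cases "j = 0")
    case True thus ?thesis using psi0 by (simp add: psi_def)
  next
    case False thus ?thesis using Phig[of "j - 1"] by (simp add: psi_def)
  qed
  obtain q where q0eq: "q 0 = q0" and qprop: "\<And>c. R D1 (\<lambda>x. \<Sum>j<Suc n. c j * psi j x) \<le> (\<Sum>j<Suc n. c j * q j)"
  proof -
    have base: "\<And>c. R D1 (\<lambda>x. c * psi 0 x) \<le> c * q0" using base_ok[OF cd1 psi0 q0] by (simp add: psi_def)
    show ?thesis using ext_all[where psi=psi and D=D1 and qz=q0 and m=n, OF cd1 psig base] that by blast
  qed
  have sumS: "(\<Sum>j<Suc n. c j * psi j x) = c 0 * psi0 x + (\<Sum>i<n. c (Suc i) * Phi i x)" for c x
    unfolding sum.lessThan_Suc_shift psi_def by simp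
  have sumQ: "(\<Sum>j<Suc n. c j * q j) = c 0 * q0 + (\<Sum>i<n. c (Suc i) * q (Suc i))" for c
    unfolding sum.lessThan_Suc_shift using q0eq by simp
  have qpos: "0 \<le> q (Suc i)" if i: "i < n" for i
  proof -
    define c where "c j = (if j = Suc i then 1 else (0::real))" for j
    have "(\<lambda>x. \<Sum>j<Suc n. c j * psi j x) = Phi i"
    proof
      fix x
      have "(\<Sum>i'<n. c (Suc i') * Phi i' x) = (\<Sum>i'<n. if i' = i then Phi i' x else 0)"
        unfolding c_def by (rule sum.cong) auto
      also have "\<dots> = Phi i x" using i by simp
      finally show "(\<Sum>j<Suc n. c j * psi j x) = Phi i x" unfolding sumS c_def by simp
    qed
    moreover have "(\<Sum>j<Suc n. c j * q j) = q (Suc i)"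
    proof -
      have "(\<Sum>i'<n. c (Suc i') * q (Suc i')) = (\<Sum>i'<n. if i' = i then q (Suc i') else 0)"
        unfolding c_def by (rule sum.cong) auto
      also have "\<dots> = q (Suc i)" using i by simp
      finally show ?thesis unfolding sumQ c_def by simp
    qed
    ultimately show ?thesis using qprop[of c] PhiR[OF i] by simp
  qed
  have key: "nu \<le> t y * q0 - (\<Sum>i<n. lam i * Al i y * q (Suc i))" for y
  proof -
    define c where "c j = (if j = 0 then t y else - lam (j - 1) * Al (j - 1) y)" for j
    have fe: "(\<lambda>x. \<Sum>j<Suc n. c j * psi j x) = (\<lambda>x. t y * psi0 x - (\<Sum>i<n. lam i * Al i y * Phi i x))"
      unfolding sumS c_def by (auto simp: sum_negf)
    have g: "(\<lambda>x. \<Sum>j<Suc n. c j * psi j x) \<in> gambles"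
      by (rule gambles_sum) (auto intro: gambles_scale psig)
    have nuX: "nu \<le> t y * psi0 x - (\<Sum>i<n. lam i * Al i y * Phi i x)" for x
    proof -
      have "(\<Sum>i<n. lam i * Al i y * Phi i x) \<le> (\<Sum>i<n. lam i * fs i (x, y))"
        by (rule sum_mono) (use Pfs lam in \<open>auto simp: mult.assoc mult.commute[of "Al _ y"] intro!: mult_left_mono less_imp_le\<close>)
      also have "\<dots> = psi0 x * t y - nu" using fun_cong[OF F, of "(x, y)"] by simp
      finally show ?thesis by (simp add: algebra_simps)
    qed
    have "nu \<le> (\<Sum>j<Suc n. c j * psi j x)" for x using fun_cong[OF fe, of x] nuX[of x] by (simp only:)
    hence "nu \<le> R D1 (\<lambda>x. \<Sum>j<Suc n. c j * psi j x)"
      by (rule R_ge_bound[OF cd1 g])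
    also have "\<dots> \<le> (\<Sum>j<Suc n. c j * q j)" by (rule qprop)
    also have "\<dots> = t y * q0 - (\<Sum>i<n. lam i * Al i y * q (Suc i))"
      unfolding sumQ c_def by (simp add: sum_negf)
    finally show ?thesis .
  qed
  define G where "G y = (\<Sum>i<n. if K i then (lam i * q (Suc i)) * Al i y else 0)" for y
  have GD: "G \<in> D2 \<or> G = (\<lambda>y. 0)" unfolding G_def
  proof (rule cd_sum_cases[OF cd2])
    fix i assume i: "i < n" and "K i"
    thus "0 \<le> lam i * q (Suc i) \<and> Al i \<in> D2" using lam[OF i] qpos[OF i] AlK[OF i] by simp
  qed
  have Gle: "G y \<le> q0 * t y - nu" for y
  proof -
    have "G y \<le> (\<Sum>i<n. lam i * Al i y * q (Suc i))" unfolding G_def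
    proof (rule sum_mono)
      fix i assume "i \<in> {..<n}" hence i: "i < n" by simp
      show "(if K i then (lam i * q (Suc i)) * Al i y else 0) \<le> lam i * Al i y * q (Suc i)"
      proof (cases "K i")
        case True thus ?thesis by (simp add: mult_ac)
      next
        case False
        have "0 \<le> lam i * Al i y * q (Suc i)"
          using lam[OF i] qpos[OF i] AlnK[OF i False, of y] by (intro mult_nonneg_nonneg) auto
        thus ?thesis using False by simp
      qed
    qed
    thus ?thesis using key[of y] by (simp add: algebra_simps)
  qed
  have tg': "(\<lambda>y. q0 * t y) \<in> gambles" by (rule gambles_scale[OF tg])
  from GD show ?thesis
  proof
    assume "G \<in> D2"
    hence "(\<lambda>y. q0 * t y - nu) \<in> D2"
      by (rule cd_up[OF cd2]) (use Gle gambles_diff[OF tg' gambles_const] in auto)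
    thus ?thesis by (rule R_ge[OF cd2 tg'])
  next
    assume "G = (\<lambda>y. 0)"
    hence "\<And>y. nu \<le> q0 * t y" using Gle by (metis diff_ge_0_iff_ge)
    thus ?thesis by (rule R_ge_bound[OF cd2 tg'])
  qed
qed



lemma memA12: assumes "f2 \<in> D2" "E \<in> B1 \<union> {UNIV}"
  shows "(\<lambda>z. f2 (snd z) * indicator E (fst z)) \<in> prod_dgs B1 B2 D1 D2"
proof -
  have "(\<lambda>(x, y). f2 y * indicator E x) \<in> prod_dgs B1 B2 D1 D2"
    unfolding prod_dgs_def by (rule natext_base) (use assms in blast)
  moreover have "(\<lambda>(x, y). f2 y * indicator E x) = (\<lambda>z. f2 (snd z) * indicator E (fst z))" by auto
  ultimately show ?thesis by simp
qed

lemma memA21: assumes "f1 \<in> D1" "E \<in> B2 \<union> {UNIV}"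
  shows "(\<lambda>z. f1 (fst z) * indicator E (snd z)) \<in> prod_dgs B1 B2 D1 D2"
proof -
  have "(\<lambda>(x, y). f1 x * indicator E y) \<in> prod_dgs B1 B2 D1 D2"
    unfolding prod_dgs_def by (rule natext_base) (use assms in blast)
  moreover have "(\<lambda>(x, y). f1 x * indicator E y) = (\<lambda>z. f1 (fst z) * indicator E (snd z))" by auto
  ultimately show ?thesis by simp
qed

lemma abs3: "(c::real) \<ge> 0 \<Longrightarrow> \<bar>a + b - c\<bar> \<le> \<bar>a\<bar> + \<bar>b\<bar> + c"
  by (auto simp: abs_if)

lemma GE:
  fixes g :: "'a \<Rightarrow> real" and h :: "'b \<Rightarrow> real"
  assumes cd1: "cd D1" and cd2: "cd D2" and gm: "meas B1 g" and hg: "h \<in> gambles" and e: "e > 0"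
  shows "\<exists>nu. R D1 (\<lambda>x. g x * R D2 h) - e < nu \<and> (\<lambda>z. g (fst z) * h (snd z) - nu) \<in> prod_dgs B1 B2 D1 D2"
proof -
  define w where "w = R D2 h"
  have gng: "g \<in> nonneg_gambles" and "\<exists>gs::nat \<Rightarrow> 'a \<Rightarrow> real. (\<forall>n. simple_meas B1 (gs n)) \<and>
        (\<forall>e>0. \<exists>N. \<forall>n\<ge>N. \<forall>x. \<bar>g x - gs n x\<bar> \<le> e)" using gm unfolding meas_def by simp_all
  then obtain gs :: "nat \<Rightarrow> 'a \<Rightarrow> real" where gs: "\<And>n. simple_meas B1 (gs n)"
    and conv0: "\<forall>e>0. \<exists>N. \<forall>n\<ge>N. \<forall>x. \<bar>g x - gs n x\<bar> \<le> e" by blast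
  have conv: "\<exists>N. \<forall>n\<ge>N. \<forall>x. \<bar>g x - gs n x\<bar> \<le> d" if "d > 0" for d using conv0 that by simp
  have gg: "g \<in> gambles" and g0: "\<And>x. 0 \<le> g x" using gng unfolding nonneg_gambles_def by auto
  obtain Gb where Gb: "Gb \<ge> 0" "\<And>x. \<bar>g x\<bar> \<le> Gb" using gg by (metis gamblesE)
  obtain M where M: "M \<ge> 0" "\<And>y. \<bar>h y\<bar> \<le> M" using hg by (metis gamblesE)
  define d2 where "d2 = min 1 (e / (4 * (Gb + 1)))"
  have d2: "d2 > 0" "d2 \<le> 1" "Gb * d2 \<le> e / 4"
  proof -
    show "d2 > 0" "d2 \<le> 1" unfolding d2_def using e Gb by auto
    have "Gb * d2 \<le> Gb * (e / (4 * (Gb + 1)))" unfolding d2_def using Gb by (intro mult_left_mono) auto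
    also have "\<dots> \<le> e / 4" using Gb e by (simp add: field_simps)
    finally show "Gb * d2 \<le> e / 4" .
  qed
  define mu2 where "mu2 = w - d2"
  have hmu: "(\<lambda>y. h y - mu2) \<in> D2" unfolding mu2_def w_def by (rule R_less[OF cd2 hg]) (use d2 in simp)
  have mu2b: "\<bar>mu2\<bar> \<le> \<bar>w\<bar> + 1" unfolding mu2_def using d2 by linarith
  define d where "d = e / (4 * (\<bar>w\<bar> + 1 + M))"
  have dpos: "d > 0" unfolding d_def using e M by simp
  have wpos: "\<bar>w\<bar> + 1 + M > 0" using M by simp
  have dbound: "d * (\<bar>w\<bar> + 1 + M) = e / 4" unfolding d_def using wpos by (simp add: field_simps)
  obtain N where N0: "\<forall>n\<ge>N. \<forall>x. \<bar>g x - gs n x\<bar> \<le> d" using conv[OF dpos] by (elim exE)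
  have N: "\<And>x. \<bar>g x - gs N x\<bar> \<le> d" using N0 by simp
  define s where "s = gs N"
  have sg: "s \<in> gambles" using gs[of N] unfolding simple_meas_def s_def nonneg_gambles_def by simp
  have "\<exists>(m::nat) (c::nat \<Rightarrow> real) (Bs::nat \<Rightarrow> 'a set).
        (\<forall>k\<le>m. c k \<ge> 0) \<and> (\<forall>k\<in>{1..m}. Bs k \<in> B1) \<and>
        s = (\<lambda>x. c 0 + (\<Sum>k=1..m. c k * indicator (Bs k) x))"
    using gs[of N] unfolding simple_meas_def s_def by simp
  then obtain m :: nat and c :: "nat \<Rightarrow> real" and Bs :: "nat \<Rightarrow> 'a set" where
    cpos0: "\<forall>k\<le>m. c k \<ge> 0" and Bs0: "\<forall>k\<in>{1..m}. Bs k \<in> B1"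
    and seq: "s = (\<lambda>x. c 0 + (\<Sum>k=1..m. c k * indicator (Bs k) x))" by blast
  have cpos: "\<And>k. k \<le> m \<Longrightarrow> c k \<ge> 0" using cpos0 by blast
  have Bs: "\<And>k. k \<in> {1..m} \<Longrightarrow> Bs k \<in> B1" using Bs0 by blast
  define u where "u x = s x * mu2 - d * M" for x
  have ug: "u \<in> gambles" unfolding u_def
    using gambles_diff[OF gambles_scale[OF sg, of mu2] gambles_const[of "d * M"]] by (simp add: mult.commute)
  define nu where "nu = R D1 u - e / 4"
  have hu: "(\<lambda>x. u x - nu) \<in> D1" unfolding nu_def by (rule R_less[OF cd1 ug]) (use e in simp)
  let ?N = "prod_dgs B1 B2 D1 D2"
  have X: "(\<lambda>z. u (fst z) - nu) \<in> ?N" using memA21[OF hu, of UNIV B2 B1 D2] by simp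
  define f where "f k = (\<lambda>z. (c k * (h (snd z) - mu2)) * indicator (if k = 0 then UNIV else Bs k) (fst z))" for k
  have fk: "f k \<in> ?N \<or> f k = (\<lambda>z. 0)" if k: "k \<in> {0..m}" for k
  proof (cases "c k = 0")
    case True thus ?thesis unfolding f_def by simp
  next
    case False
    hence ck: "c k > 0" using cpos[of k] k by auto
    have a: "(\<lambda>y. c k * (h y - mu2)) \<in> D2" by (rule cd_scale[OF cd2 hmu ck])
    have b: "(if k = 0 then UNIV else Bs k) \<in> B1 \<union> {UNIV}" using Bs[of k] k by auto
    have "f k \<in> ?N" unfolding f_def by (rule memA12[OF a b])
    thus ?thesis by (rule disjI1)
  qed
  have T: "(\<lambda>z. u (fst z) - nu + (\<Sum>k\<in>{0..m}. f k z)) \<in> ?N"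
    unfolding prod_dgs_def by (rule natext_sum0[OF X[unfolded prod_dgs_def] finite_atLeastAtMost fk[unfolded prod_dgs_def]])
  have Teq: "u (fst z) - nu + (\<Sum>k\<in>{0..m}. f k z) = s (fst z) * h (snd z) - d * M - nu" for z
  proof -
    have "(\<Sum>k\<in>{0..m}. f k z) = f 0 z + (\<Sum>k\<in>{Suc 0..m}. f k z)" by (simp add: sum.atLeast_Suc_atMost)
    also have "(\<Sum>k\<in>{Suc 0..m}. f k z) = (\<Sum>k=1..m. c k * indicator (Bs k) (fst z)) * (h (snd z) - mu2)"
      unfolding sum_distrib_right f_def by (rule sum.cong) auto
    also have "f 0 z = c 0 * (h (snd z) - mu2)" unfolding f_def by simp
    finally have "(\<Sum>k\<in>{0..m}. f k z) = s (fst z) * (h (snd z) - mu2)" unfolding seq by (simp add: algebra_simps)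
    thus ?thesis unfolding u_def by (simp add: algebra_simps)
  qed
  have sf: "(\<lambda>z. s (fst z)) \<in> gambles" by (rule gambles_comp[OF sg])
  have gf: "(\<lambda>z. g (fst z)) \<in> gambles" by (rule gambles_comp[OF gg])
  have hs: "(\<lambda>z. h (snd z)) \<in> gambles" by (rule gambles_comp[OF hg])
  have Tg: "(\<lambda>z. s (fst z) * h (snd z) - d * M - nu) \<in> gambles"
    by (rule gambles_diff[OF gambles_diff[OF gambles_mult[OF sf hs] gambles_const] gambles_const])
  have Fg: "(\<lambda>z. g (fst z) * h (snd z) - nu) \<in> gambles"
    by (rule gambles_diff[OF gambles_mult[OF gf hs] gambles_const])
  have T2: "(\<lambda>z. s (fst z) * h (snd z) - d * M - nu) \<in> ?N" using T unfolding Teq .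
  have le: "s (fst z) * h (snd z) - d * M - nu \<le> g (fst z) * h (snd z) - nu" for z
  proof -
    have a1: "\<bar>g (fst z) - s (fst z)\<bar> \<le> d" using N[of "fst z"] by (simp add: s_def)
    have a2: "\<bar>h (snd z)\<bar> \<le> M" by (rule M(2))
    have "\<bar>g (fst z) - s (fst z)\<bar> * \<bar>h (snd z)\<bar> \<le> d * M"
      by (rule mult_mono[OF a1 a2]) (use dpos in auto)
    hence "\<bar>(g (fst z) - s (fst z)) * h (snd z)\<bar> \<le> d * M" by (simp only: abs_mult)
    hence b: "- (d * M) \<le> (g (fst z) - s (fst z)) * h (snd z)" by linarith
    have "(g (fst z) - s (fst z)) * h (snd z) = g (fst z) * h (snd z) - s (fst z) * h (snd z)"
      by (simp only: left_diff_distrib)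
    thus ?thesis using b by linarith
  qed
  have mem: "(\<lambda>z. g (fst z) * h (snd z) - nu) \<in> ?N"
    unfolding prod_dgs_def by (rule natext_up[OF T2[unfolded prod_dgs_def] Tg Fg]) (rule le)
  have close: "\<bar>u x - g x * w\<bar> \<le> e / 2" for x
  proof -
    have eq: "u x - g x * w = (s x - g x) * mu2 + g x * (mu2 - w) - d * M" unfolding u_def by (simp add: algebra_simps)
    have t1: "\<bar>(s x - g x) * mu2 + g x * (mu2 - w) - d * M\<bar> \<le> \<bar>(s x - g x) * mu2\<bar> + \<bar>g x * (mu2 - w)\<bar> + d * M"
      by (rule abs3[OF mult_nonneg_nonneg[OF less_imp_le[OF dpos] M(1)]])
    have a1: "\<bar>s x - g x\<bar> \<le> d" using N[of x] by (simp add: s_def abs_minus_commute)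
    have t2: "\<bar>s x - g x\<bar> * \<bar>mu2\<bar> \<le> d * (\<bar>w\<bar> + 1)"
      by (rule mult_mono[OF a1 mu2b]) (use dpos in auto)
    have a3: "\<bar>mu2 - w\<bar> \<le> d2" unfolding mu2_def using d2 by simp
    have t3: "\<bar>g x\<bar> * \<bar>mu2 - w\<bar> \<le> Gb * d2"
      by (rule mult_mono[OF Gb(2) a3]) (use Gb in auto)
    have "\<bar>u x - g x * w\<bar> \<le> d * (\<bar>w\<bar> + 1) + Gb * d2 + d * M"
      using t1 t2 t3 unfolding eq abs_mult by linarith
    also have "\<dots> = d * (\<bar>w\<bar> + 1 + M) + Gb * d2" by (simp add: algebra_simps)
    also have "\<dots> \<le> e / 2" using dbound d2(3) by simp
    finally show ?thesis .
  qed
  have "R D1 (\<lambda>x. g x * w) - e / 2 \<le> R D1 u"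
    by (rule R_cont[OF cd1 ug gambles_scale[OF gg, of w, unfolded mult.commute[of w]]]) (rule close)
  hence "R D1 (\<lambda>x. g x * w) - e < nu" unfolding nu_def using e by simp
  thus ?thesis using mem unfolding w_def by (intro exI[of _ nu] conjI)
qed



lemma prod_swap:
  assumes mem: "F \<in> prod_dgs B1 B2 D1 D2"
  shows "(\<lambda>z. F (snd z, fst z)) \<in> prod_dgs B2 B1 D2 D1"
proof -
  obtain n :: nat and lam fs where n: "n \<ge> 1" and lam: "\<And>i. i < n \<Longrightarrow> lam i > (0::real)"
    and fs: "\<And>i. i < n \<Longrightarrow> (\<exists>f2 E1. f2 \<in> D2 \<and> E1 \<in> B1 \<union> {UNIV} \<and> fs i = (\<lambda>(x, y). f2 y * indicator E1 x))
         \<or> (\<exists>f1 E2. f1 \<in> D1 \<and> E2 \<in> B2 \<union> {UNIV} \<and> fs i = (\<lambda>(x, y). f1 x * indicator E2 y))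
         \<or> fs i \<in> pos_gambles"
    and F: "F = (\<lambda>z. \<Sum>i<n. lam i * fs i z)"
    using prod_dgs_elems[OF mem] by blast
  define fs' where "fs' i = (\<lambda>z. fs i (snd z, fst z))" for i
  let ?A = "({h. \<exists>f2 E1. f2 \<in> D1 \<and> E1 \<in> B2 \<union> {UNIV} \<and> h = (\<lambda>(x, y). f2 y * indicator E1 x)} \<union>
      {h. \<exists>f1 E2. f1 \<in> D2 \<and> E2 \<in> B1 \<union> {UNIV} \<and> h = (\<lambda>(x, y). f1 x * indicator E2 y)}) \<union> pos_gambles"
  have fs': "fs' i \<in> ?A" if i: "i < n" for i
  proof -
    from fs[OF i] consider
      (a) f2 E1 where "f2 \<in> D2" "E1 \<in> B1 \<union> {UNIV}" "fs i = (\<lambda>(x, y). f2 y * indicator E1 x)"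
    | (b) f1 E2 where "f1 \<in> D1" "E2 \<in> B2 \<union> {UNIV}" "fs i = (\<lambda>(x, y). f1 x * indicator E2 y)"
    | (c) "fs i \<in> pos_gambles" by blast
    then show ?thesis
    proof cases
      case a
      have "fs' i = (\<lambda>(x, y). f2 x * indicator E1 y)" unfolding fs'_def a(3) by auto
      thus ?thesis using a(1,2) by blast
    next
      case b
      have "fs' i = (\<lambda>(x, y). f1 y * indicator E2 x)" unfolding fs'_def b(3) by auto
      thus ?thesis using b(1,2) by blast
    next
      case c
      have g: "fs i \<in> gambles" "\<And>z. fs i z \<ge> 0" "fs i \<noteq> (\<lambda>x. 0)" using c unfolding pos_gambles_def by auto
      have "\<exists>z. fs i z \<noteq> 0"
      proof (rule ccontr)
        assume "\<not> (\<exists>z. fs i z \<noteq> 0)"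
        hence "fs i = (\<lambda>x. 0)" by auto
        thus False using g(3) by simp
      qed
      then obtain z0 where z0: "fs i z0 \<noteq> 0" by blast
      have "fs' i \<in> pos_gambles"
      proof (rule pos_gamblesI[where z="(snd z0, fst z0)"])
        show "fs' i \<in> gambles" unfolding fs'_def by (rule gambles_comp[OF g(1)])
        show "\<And>x. 0 \<le> fs' i x" unfolding fs'_def using g(2) by simp
        show "fs' i (snd z0, fst z0) \<noteq> 0" unfolding fs'_def using z0 by simp
      qed
      thus ?thesis by blast
    qed
  qed
  have eq: "(\<lambda>z. F (snd z, fst z)) = (\<lambda>z. \<Sum>i<n. lam i * fs' i z)" unfolding F fs'_def by simp
  have "(\<lambda>z. F (snd z, fst z)) \<in> posi ?A" unfolding posi_def
    using n lam fs' eq by blast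
  thus ?thesis unfolding prod_dgs_def natext_set_def .
qed

lemma lpr_eq:
  assumes le: "\<And>nu. (\<lambda>z. F z - nu) \<in> D \<Longrightarrow> nu \<le> v"
    and ge: "\<And>e. e > 0 \<Longrightarrow> \<exists>nu. v - e < nu \<and> (\<lambda>z. F z - nu) \<in> D"
  shows "lpr D F UNIV = ereal v"
proof -
  let ?S = "{mu. (\<lambda>x. F x - mu) \<in> D}"
  have "lpr D F UNIV = Sup (ereal ` ?S)" unfolding lpr_def by simp
  also have "\<dots> = ereal v"
  proof (rule antisym)
    show "Sup (ereal ` ?S) \<le> ereal v"
      by (rule SUP_least) (use le in auto)
    show "ereal v \<le> Sup (ereal ` ?S)"
    proof (rule ereal_le_epsilon2)
      fix e :: real assume e: "0 < e"
      obtain nu where nu: "v - e < nu" "(\<lambda>z. F z - nu) \<in> D" using ge[OF e] by blast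
      hence "ereal nu \<le> Sup (ereal ` ?S)" by (intro SUP_upper) simp
      moreover have "ereal v \<le> ereal nu + ereal e" using nu(1) by simp
      ultimately show "ereal v \<le> Sup (ereal ` ?S) + ereal e"
        by (meson add_right_mono order_trans)
    qed
  qed
  finally show ?thesis .
qed

lemma R_gw: assumes "cd D" "g \<in> gambles"
  shows "w \<ge> 0 \<Longrightarrow> R D (\<lambda>x. g x * w) = R D g * w"
    and "w \<le> 0 \<Longrightarrow> R D (\<lambda>x. g x * w) = - R D (\<lambda>x. - g x) * w"
proof -
  have eq: "(\<lambda>x. g x * w) = (\<lambda>x. w * g x)" by (auto simp: mult.commute)
  show "w \<ge> 0 \<Longrightarrow> R D (\<lambda>x. g x * w) = R D g * w"
    unfolding eq using R_scale_nonneg[OF assms] by (simp add: mult.commute)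
  show "w \<le> 0 \<Longrightarrow> R D (\<lambda>x. g x * w) = - R D (\<lambda>x. - g x) * w"
    unfolding eq using R_scale_neg[OF assms] by (simp add: mult.commute)
qed

lemma case1:
  fixes g :: "'a \<Rightarrow> real" and h :: "'b \<Rightarrow> real"
  assumes cd1: "cd D1" and cd2: "cd D2" and gm: "meas B1 g" and hg: "h \<in> gambles"
  shows "lpr (prod_dgs B1 B2 D1 D2) (\<lambda>(x, y). g x * h y) UNIV = ereal (R D1 (\<lambda>x. g x * R D2 h))"
proof -
  have gng: "g \<in> nonneg_gambles" using gm unfolding meas_def by simp
  have gg: "g \<in> gambles" and g0: "\<And>x. 0 \<le> g x" using gng unfolding nonneg_gambles_def by auto
  define w where "w = R D2 h"
  have Rg0: "0 \<le> R D1 g" by (rule R_ge_bound[OF cd1 gg g0])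
  have Rgn: "R D1 g \<le> - R D1 (\<lambda>x. - g x)" using R_neg[OF cd1 gg] by simp
  define q0 where "q0 = (if w \<ge> 0 then R D1 g else - R D1 (\<lambda>x. - g x))"
  have q0: "R D1 g \<le> q0" "q0 \<le> - R D1 (\<lambda>x. - g x)" "0 \<le> q0" unfolding q0_def using Rg0 Rgn by auto
  have q0w: "q0 * w = R D1 (\<lambda>x. g x * w)"
    unfolding q0_def using R_gw[OF cd1 gg, of w] by auto
  have feq: "(\<lambda>(x, y). g x * h y) = (\<lambda>z. g (fst z) * h (snd z))" by auto
  show ?thesis unfolding feq
  proof (rule lpr_eq)
    fix nu assume "(\<lambda>z. g (fst z) * h (snd z) - nu) \<in> prod_dgs B1 B2 D1 D2"
    from LE[OF cd1 cd2 gg hg q0(1,2) this] have "nu \<le> R D2 (\<lambda>y. q0 * h y)" .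
    also have "\<dots> = q0 * w" unfolding w_def by (rule R_scale_nonneg[OF cd2 hg q0(3)])
    finally show "nu \<le> R D1 (\<lambda>x. g x * R D2 h)" using q0w unfolding w_def by simp
  next
    fix e :: real assume "e > 0"
    from GE[OF cd1 cd2 gm hg this, of B2]
    show "\<exists>nu. R D1 (\<lambda>x. g x * R D2 h) - e < nu \<and> (\<lambda>z. g (fst z) * h (snd z) - nu) \<in> prod_dgs B1 B2 D1 D2" .
  qed
qed

lemma case2:
  fixes g :: "'b \<Rightarrow> real" and h :: "'a \<Rightarrow> real"
  assumes cd1: "cd D1" and cd2: "cd D2" and gm: "meas B2 g" and hg: "h \<in> gambles"
  shows "lpr (prod_dgs B1 B2 D1 D2) (\<lambda>(x, y). h x * g y) UNIV = ereal (R D2 (\<lambda>y. g y * R D1 h))"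
proof -
  have gng: "g \<in> nonneg_gambles" using gm unfolding meas_def by simp
  have gg: "g \<in> gambles" using gng unfolding nonneg_gambles_def by auto
  have Rhn: "R D1 h \<le> - R D1 (\<lambda>x. - h x)" using R_neg[OF cd1 hg] by simp
  have feq: "(\<lambda>(x, y). h x * g y) = (\<lambda>z. h (fst z) * g (snd z))" by auto
  show ?thesis unfolding feq
  proof (rule lpr_eq)
    fix nu assume "(\<lambda>z. h (fst z) * g (snd z) - nu) \<in> prod_dgs B1 B2 D1 D2"
    from LE[OF cd1 cd2 hg gg order_refl Rhn this] have "nu \<le> R D2 (\<lambda>y. R D1 h * g y)" .
    thus "nu \<le> R D2 (\<lambda>y. g y * R D1 h)" by (simp add: mult.commute)
  next
    fix e :: real assume "e > 0"
    from GE[OF cd2 cd1 gm hg this, of B1] obtain nu where nu: "R D2 (\<lambda>y. g y * R D1 h) - e < nu"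
      "(\<lambda>z. g (fst z) * h (snd z) - nu) \<in> prod_dgs B2 B1 D2 D1" by blast
    from prod_swap[OF nu(2)] have "(\<lambda>z. h (fst z) * g (snd z) - nu) \<in> prod_dgs B1 B2 D1 D2"
      by (simp add: mult.commute)
    thus "\<exists>nu. R D2 (\<lambda>y. g y * R D1 h) - e < nu \<and> (\<lambda>z. h (fst z) * g (snd z) - nu) \<in> prod_dgs B1 B2 D1 D2"
      using nu(1) by blast
  qed
qed


theorem corollary22:
  fixes \<B>1 :: "'a set set" and \<B>2 :: "'b set set"
    and C1 :: "(('a \<Rightarrow> real) \<times> 'a set) set" and P1 :: "('a \<Rightarrow> real) \<Rightarrow> 'a set \<Rightarrow> ereal"
    and C2 :: "(('b \<Rightarrow> real) \<times> 'b set) set" and P2 :: "('b \<Rightarrow> real) \<Rightarrow> 'b set \<Rightarrow> ereal"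
  assumes "{} \<notin> \<B>1" and "{} \<notin> \<B>2"
    and "C1 \<subseteq> Cdom" and "C2 \<subseteq> Cdom"
    and "coherent_clp C1 P1" and "coherent_clp C2 P2"
  shows "(\<forall>g h. meas \<B>1 g \<and> h \<in> gambles \<longrightarrow>
           prod_clp \<B>1 \<B>2 C1 P1 C2 P2 (\<lambda>(x, y). g x * h y) UNIV
             = natext C1 P1 (\<lambda>x. g x * real_of_ereal (natext C2 P2 h UNIV)) UNIV
           \<and> (natext C2 P2 h UNIV \<ge> 0 \<longrightarrow>
               natext C1 P1 (\<lambda>x. g x * real_of_ereal (natext C2 P2 h UNIV)) UNIV
                 = natext C1 P1 g UNIV * natext C2 P2 h UNIV)
           \<and> (natext C2 P2 h UNIV \<le> 0 \<longrightarrow>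
               natext C1 P1 (\<lambda>x. g x * real_of_ereal (natext C2 P2 h UNIV)) UNIV
                 = - natext C1 P1 (\<lambda>x. - g x) UNIV * natext C2 P2 h UNIV))
    \<and> (\<forall>g h. meas \<B>2 g \<and> h \<in> gambles \<longrightarrow>
           prod_clp \<B>1 \<B>2 C1 P1 C2 P2 (\<lambda>(x, y). h x * g y) UNIV
             = natext C2 P2 (\<lambda>y. g y * real_of_ereal (natext C1 P1 h UNIV)) UNIV
           \<and> (natext C1 P1 h UNIV \<ge> 0 \<longrightarrow>
               natext C2 P2 (\<lambda>y. g y * real_of_ereal (natext C1 P1 h UNIV)) UNIV
                 = natext C2 P2 g UNIV * natext C1 P1 h UNIV)
           \<and> (natext C1 P1 h UNIV \<le> 0 \<longrightarrow>
               natext C2 P2 (\<lambda>y. g y * real_of_ereal (natext C1 P1 h UNIV)) UNIV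
                 = - natext C2 P2 (\<lambda>y. - g y) UNIV * natext C1 P1 h UNIV))"
proof -
  let ?D1 = "natext_clp_set C1 P1"
  let ?D2 = "natext_clp_set C2 P2"
  have cd1: "cd ?D1" by (rule cd_natext_clp[OF assms(3) assms(5)])
  have cd2: "cd ?D2" by (rule cd_natext_clp[OF assms(4) assms(6)])
  have nat1: "natext C1 P1 f UNIV = ereal (R ?D1 f)" if "f \<in> gambles" for f
    unfolding natext_def by (rule lpr_R[OF cd1 that])
  have nat2: "natext C2 P2 f UNIV = ereal (R ?D2 f)" if "f \<in> gambles" for f
    unfolding natext_def by (rule lpr_R[OF cd2 that])
  have pc: "prod_clp \<B>1 \<B>2 C1 P1 C2 P2 F B = lpr (prod_dgs \<B>1 \<B>2 ?D1 ?D2) F B" for F B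
    by (simp add: prod_clp_def)
  have part1: "\<forall>g h. meas \<B>1 g \<and> h \<in> gambles \<longrightarrow>
           prod_clp \<B>1 \<B>2 C1 P1 C2 P2 (\<lambda>(x, y). g x * h y) UNIV
             = natext C1 P1 (\<lambda>x. g x * real_of_ereal (natext C2 P2 h UNIV)) UNIV
           \<and> (natext C2 P2 h UNIV \<ge> 0 \<longrightarrow>
               natext C1 P1 (\<lambda>x. g x * real_of_ereal (natext C2 P2 h UNIV)) UNIV
                 = natext C1 P1 g UNIV * natext C2 P2 h UNIV)
           \<and> (natext C2 P2 h UNIV \<le> 0 \<longrightarrow>
               natext C1 P1 (\<lambda>x. g x * real_of_ereal (natext C2 P2 h UNIV)) UNIV
                 = - natext C1 P1 (\<lambda>x. - g x) UNIV * natext C2 P2 h UNIV)"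
  proof (intro allI impI)
    fix g :: "'a \<Rightarrow> real" and h :: "'b \<Rightarrow> real"
    assume a: "meas \<B>1 g \<and> h \<in> gambles"
    hence gm: "meas \<B>1 g" and hg: "h \<in> gambles" by auto
    have gg: "g \<in> gambles" using gm unfolding meas_def nonneg_gambles_def by simp
    define w where "w = R ?D2 h"
    have Nh: "natext C2 P2 h UNIV = ereal w" using nat2[OF hg] unfolding w_def .
    have gw: "(\<lambda>x. g x * w) \<in> gambles" using gambles_scale[OF gg, of w] by (simp add: mult.commute)
    have ng: "(\<lambda>x. - g x) \<in> gambles" by (rule gambles_uminus[OF gg])
    have L: "prod_clp \<B>1 \<B>2 C1 P1 C2 P2 (\<lambda>(x, y). g x * h y) UNIV
             = natext C1 P1 (\<lambda>x. g x * real_of_ereal (natext C2 P2 h UNIV)) UNIV"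
      unfolding pc Nh real_of_ereal.simps nat1[OF gw] using case1[OF cd1 cd2 gm hg, of \<B>2] unfolding w_def
      by simp
    have M2: "natext C2 P2 h UNIV \<ge> 0 \<longrightarrow>
               natext C1 P1 (\<lambda>x. g x * real_of_ereal (natext C2 P2 h UNIV)) UNIV
                 = natext C1 P1 g UNIV * natext C2 P2 h UNIV"
      unfolding Nh real_of_ereal.simps nat1[OF gw] nat1[OF gg] using R_gw(1)[OF cd1 gg, of w] by simp
    have M3: "natext C2 P2 h UNIV \<le> 0 \<longrightarrow>
               natext C1 P1 (\<lambda>x. g x * real_of_ereal (natext C2 P2 h UNIV)) UNIV
                 = - natext C1 P1 (\<lambda>x. - g x) UNIV * natext C2 P2 h UNIV"
      unfolding Nh real_of_ereal.simps nat1[OF gw] nat1[OF ng] using R_gw(2)[OF cd1 gg, of w] by simp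
    show "prod_clp \<B>1 \<B>2 C1 P1 C2 P2 (\<lambda>(x, y). g x * h y) UNIV
             = natext C1 P1 (\<lambda>x. g x * real_of_ereal (natext C2 P2 h UNIV)) UNIV
           \<and> (natext C2 P2 h UNIV \<ge> 0 \<longrightarrow>
               natext C1 P1 (\<lambda>x. g x * real_of_ereal (natext C2 P2 h UNIV)) UNIV
                 = natext C1 P1 g UNIV * natext C2 P2 h UNIV)
           \<and> (natext C2 P2 h UNIV \<le> 0 \<longrightarrow>
               natext C1 P1 (\<lambda>x. g x * real_of_ereal (natext C2 P2 h UNIV)) UNIV
                 = - natext C1 P1 (\<lambda>x. - g x) UNIV * natext C2 P2 h UNIV)"
      using L M2 M3 by blast
  qed
  have part2: "\<forall>g h. meas \<B>2 g \<and> h \<in> gambles \<longrightarrow>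
           prod_clp \<B>1 \<B>2 C1 P1 C2 P2 (\<lambda>(x, y). h x * g y) UNIV
             = natext C2 P2 (\<lambda>y. g y * real_of_ereal (natext C1 P1 h UNIV)) UNIV
           \<and> (natext C1 P1 h UNIV \<ge> 0 \<longrightarrow>
               natext C2 P2 (\<lambda>y. g y * real_of_ereal (natext C1 P1 h UNIV)) UNIV
                 = natext C2 P2 g UNIV * natext C1 P1 h UNIV)
           \<and> (natext C1 P1 h UNIV \<le> 0 \<longrightarrow>
               natext C2 P2 (\<lambda>y. g y * real_of_ereal (natext C1 P1 h UNIV)) UNIV
                 = - natext C2 P2 (\<lambda>y. - g y) UNIV * natext C1 P1 h UNIV)"
  proof (intro allI impI)
    fix g :: "'b \<Rightarrow> real" and h :: "'a \<Rightarrow> real"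
    assume a: "meas \<B>2 g \<and> h \<in> gambles"
    hence gm: "meas \<B>2 g" and hg: "h \<in> gambles" by auto
    have gg: "g \<in> gambles" using gm unfolding meas_def nonneg_gambles_def by simp
    define w where "w = R ?D1 h"
    have Nh: "natext C1 P1 h UNIV = ereal w" using nat1[OF hg] unfolding w_def .
    have gw: "(\<lambda>y. g y * w) \<in> gambles" using gambles_scale[OF gg, of w] by (simp add: mult.commute)
    have ng: "(\<lambda>y. - g y) \<in> gambles" by (rule gambles_uminus[OF gg])
    have L: "prod_clp \<B>1 \<B>2 C1 P1 C2 P2 (\<lambda>(x, y). h x * g y) UNIV
             = natext C2 P2 (\<lambda>y. g y * real_of_ereal (natext C1 P1 h UNIV)) UNIV"
      unfolding pc Nh real_of_ereal.simps nat2[OF gw] using case2[OF cd1 cd2 gm hg, of \<B>1] unfolding w_def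
      by simp
    have M2: "natext C1 P1 h UNIV \<ge> 0 \<longrightarrow>
               natext C2 P2 (\<lambda>y. g y * real_of_ereal (natext C1 P1 h UNIV)) UNIV
                 = natext C2 P2 g UNIV * natext C1 P1 h UNIV"
      unfolding Nh real_of_ereal.simps nat2[OF gw] nat2[OF gg] using R_gw(1)[OF cd2 gg, of w] by simp
    have M3: "natext C1 P1 h UNIV \<le> 0 \<longrightarrow>
               natext C2 P2 (\<lambda>y. g y * real_of_ereal (natext C1 P1 h UNIV)) UNIV
                 = - natext C2 P2 (\<lambda>y. - g y) UNIV * natext C1 P1 h UNIV"
      unfolding Nh real_of_ereal.simps nat2[OF gw] nat2[OF ng] using R_gw(2)[OF cd2 gg, of w] by simp
    show "prod_clp \<B>1 \<B>2 C1 P1 C2 P2 (\<lambda>(x, y). h x * g y) UNIV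
             = natext C2 P2 (\<lambda>y. g y * real_of_ereal (natext C1 P1 h UNIV)) UNIV
           \<and> (natext C1 P1 h UNIV \<ge> 0 \<longrightarrow>
               natext C2 P2 (\<lambda>y. g y * real_of_ereal (natext C1 P1 h UNIV)) UNIV
                 = natext C2 P2 g UNIV * natext C1 P1 h UNIV)
           \<and> (natext C1 P1 h UNIV \<le> 0 \<longrightarrow>
               natext C2 P2 (\<lambda>y. g y * real_of_ereal (natext C1 P1 h UNIV)) UNIV
                 = - natext C2 P2 (\<lambda>y. - g y) UNIV * natext C1 P1 h UNIV)"
      using L M2 M3 by blast
  qed
  show ?thesis using part1 part2 by blast
qed

end
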